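(* If $mG$ is a finite canonical misinformation game, then the terminal set $\mathcal{T}$ of the Adaptation Procedure on $mG$ is nonempty.
   Context: A normal-form game is $G=\langle N,S,P\rangle$ with finite players $N$, finite pure strategy sets $S_i$, positions $S=\times_i S_i$, payoffs $P_i:S\to\mathbb{R}$. A misinformation game $mG=\langle G^0,G^1,\dots,G^{|N|}\rangle$ consists of the actual game $G^0$ and subjective games $G^i$; it is canonical if all $G^i=\langle N,S,P^i\rangle$ differ from $G^0$ only in payoffs and in every $G^i$ all players have equally many pure strategies. $NME(mG)$ is the set of profiles $\sigma=(\sigma_1,\dots,\sigma_{|N|})$ such that each $\sigma_i$ is player $i$'s component of some Nash equilibrium of $G^i$. $\chi(\sigma)=\mathrm{supp}(\sigma_1)\times\dots\times\mathrm{supp}(\sigma_{|N|})$. For $\vec v\in S$, $mG_{\vec v}$ is obtained by replacing, in every $P^i$ ($i\ge1$), the payoff vector at position $\vec v$ by $P^0(\vec v)$. For a set $M$ of misinformation games, $\mathcal{AD}(M)=\{mG_{\vec u}: mG\in M,\sigma\in NME(mG),\vec u\in\chi(\sigma)\}$, $\mathcal{AD}^{(0)}(M)=M$, $\mathcal{AD}^{(t+1)}(M)=\mathcal{AD}^{(t)}(\mathcal{AD}(M))$, $\mathcal{AD}^*(M)=\bigcup_{t\ge0}\mathcal{AD}^{(t)}(M)$. The terminal set of the Adaptation Procedure on $mG$ is $\mathcal{T}=\{mG'\in\mathcal{AD}^*(\{mG\}): mG'\in\mathcal{AD}(\{mG'\})\}$. *)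

theory Defs
  imports Complex_Main "HOL-Library.FuncSet"
begin

(* Players are 0..<n; player i has the finite nonempty pure strategy set S i.
   A position is an element of PiE {..<n} S.
   A payoff function maps a position and a player to a real number. *)

type_synonym 's payoff = "(nat \<Rightarrow> 's) \<Rightarrow> nat \<Rightarrow> real"

(* A canonical misinformation game over (n, S): the actual payoffs P^0 and,
   for each player i < n, the subjective payoffs P^i; all games share players
   and strategy sets, so only payoffs are stored. *)
type_synonym 's mgame = "'s payoff \<times> (nat \<Rightarrow> 's payoff)"

definition positions :: "nat \<Rightarrow> (nat \<Rightarrow> 's set) \<Rightarrow> (nat \<Rightarrow> 's) set" where
  "positions n S = PiE {..<n} S"

definition mixed_strategy :: "'s set \<Rightarrow> ('s \<Rightarrow> real) \<Rightarrow> bool" where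
  "mixed_strategy A p \<longleftrightarrow> (\<forall>s. 0 \<le> p s) \<and> (\<forall>s. s \<notin> A \<longrightarrow> p s = 0) \<and> sum p A = 1"

definition mixed_profile :: "nat \<Rightarrow> (nat \<Rightarrow> 's set) \<Rightarrow> (nat \<Rightarrow> 's \<Rightarrow> real) \<Rightarrow> bool" where
  "mixed_profile n S \<sigma> \<longleftrightarrow> (\<forall>i<n. mixed_strategy (S i) (\<sigma> i))"

definition exp_payoff :: "nat \<Rightarrow> (nat \<Rightarrow> 's set) \<Rightarrow> 's payoff \<Rightarrow> (nat \<Rightarrow> 's \<Rightarrow> real) \<Rightarrow> nat \<Rightarrow> real" where
  "exp_payoff n S P \<sigma> j = (\<Sum>v\<in>positions n S. (\<Prod>i<n. \<sigma> i (v i)) * P v j)"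

definition nash_eq :: "nat \<Rightarrow> (nat \<Rightarrow> 's set) \<Rightarrow> 's payoff \<Rightarrow> (nat \<Rightarrow> 's \<Rightarrow> real) \<Rightarrow> bool" where
  "nash_eq n S P \<sigma> \<longleftrightarrow> mixed_profile n S \<sigma> \<and>
     (\<forall>j<n. \<forall>\<tau>. mixed_strategy (S j) \<tau> \<longrightarrow>
        exp_payoff n S P (\<sigma>(j := \<tau>)) j \<le> exp_payoff n S P \<sigma> j)"

definition NME :: "nat \<Rightarrow> (nat \<Rightarrow> 's set) \<Rightarrow> 's mgame \<Rightarrow> (nat \<Rightarrow> 's \<Rightarrow> real) set" where
  "NME n S mG = {\<sigma>. \<forall>i<n. \<exists>\<tau>. nash_eq n S (snd mG i) \<tau> \<and> \<sigma> i = \<tau> i}"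

definition chi :: "nat \<Rightarrow> (nat \<Rightarrow> 's \<Rightarrow> real) \<Rightarrow> (nat \<Rightarrow> 's) set" where
  "chi n \<sigma> = PiE {..<n} (\<lambda>i. {s. \<sigma> i s \<noteq> 0})"

definition adapt :: "nat \<Rightarrow> 's mgame \<Rightarrow> (nat \<Rightarrow> 's) \<Rightarrow> 's mgame" where
  "adapt n mG v = (fst mG, \<lambda>i. if i < n then (snd mG i)(v := fst mG v) else snd mG i)"

definition AD :: "nat \<Rightarrow> (nat \<Rightarrow> 's set) \<Rightarrow> 's mgame set \<Rightarrow> 's mgame set" where
  "AD n S M = {adapt n mG u | mG \<sigma> u. mG \<in> M \<and> \<sigma> \<in> NME n S mG \<and> u \<in> chi n \<sigma>}"

definition AD_star :: "nat \<Rightarrow> (nat \<Rightarrow> 's set) \<Rightarrow> 's mgame set \<Rightarrow> 's mgame set" where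
  "AD_star n S M = (\<Union>t. (AD n S ^^ t) M)"

definition terminal_set :: "nat \<Rightarrow> (nat \<Rightarrow> 's set) \<Rightarrow> 's mgame \<Rightarrow> 's mgame set" where
  "terminal_set n S mG = {mG' \<in> AD_star n S {mG}. mG' \<in> AD n S {mG'}}"

end

theory Submission imports Defs "HOL-Analysis.Analysis" begin


lemma bw_multi:
  fixes Z :: "nat \<Rightarrow> nat \<Rightarrow> real"
  assumes "\<And>k j. j < N \<Longrightarrow> 0 \<le> Z k j \<and> Z k j \<le> 1"
  shows "\<exists>\<phi> z. strict_mono \<phi> \<and> (\<forall>j<N. (\<lambda>k. Z (\<phi> k) j) \<longlonglongrightarrow> z j)"
  using assms
proof (induction N)
  case 0
  show ?case by (rule exI[of _ id]) (auto simp: strict_mono_def)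
next
  case (Suc N)
  then obtain \<phi> z where phi: "strict_mono \<phi>" "\<forall>j<N. (\<lambda>k. Z (\<phi> k) j) \<longlonglongrightarrow> z j"
    by (meson less_SucI)
  have "seq_compact {0..1::real}" by (rule compact_imp_seq_compact[OF compact_Icc])
  moreover have "\<forall>k. Z (\<phi> k) N \<in> {0..1}" using Suc.prems by auto
  ultimately obtain l r where lr: "strict_mono (r::nat\<Rightarrow>nat)" "((\<lambda>k. Z (\<phi> k) N) \<circ> r) \<longlonglongrightarrow> l"
    by (rule seq_compactE)
  show ?case
  proof (intro exI conjI allI impI)
    show "strict_mono (\<phi> \<circ> r)" using phi(1) lr(1) by (rule strict_mono_o)
    fix j assume "j < Suc N"
    show "(\<lambda>k. Z ((\<phi> \<circ> r) k) j) \<longlonglongrightarrow> (z(N := l)) j"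
    proof (cases "j = N")
      case True then show ?thesis using lr(2) by (simp add: o_def)
    next
      case False
      then have "j < N" using \<open>j < Suc N\<close> by simp
      have "((\<lambda>k. Z (\<phi> k) j) \<circ> r) \<longlonglongrightarrow> z j"
        using LIMSEQ_subseq_LIMSEQ[OF phi(2)[rule_format, OF \<open>j<N\<close>] lr(1)] .
      then show ?thesis using False by (simp add: o_def)
    qed
  qed
qed

lemma brouwer_nat:
  fixes f :: "(nat \<Rightarrow> real) \<Rightarrow> (nat \<Rightarrow> real)"
  assumes maps: "\<And>x. \<forall>j<N. 0 \<le> x j \<and> x j \<le> 1 \<Longrightarrow> \<forall>j<N. 0 \<le> f x j \<and> f x j \<le> 1"
  and cont: "\<And>X x j. (\<And>k. \<forall>j<N. 0 \<le> X k j \<and> X k j \<le> 1) \<Longrightarrow> \<forall>j<N. 0 \<le> x j \<and> x j \<le> 1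
      \<Longrightarrow> (\<And>j. j < N \<Longrightarrow> (\<lambda>k. X k j) \<longlonglongrightarrow> x j) \<Longrightarrow> j < N \<Longrightarrow> (\<lambda>k. f (X k) j) \<longlonglongrightarrow> f x j"
  shows "\<exists>x. (\<forall>j<N. 0 \<le> x j \<and> x j \<le> 1) \<and> (\<forall>j<N. f x j = x j)"
proof -
  define pt :: "nat \<Rightarrow> (nat \<Rightarrow> nat) \<Rightarrow> nat \<Rightarrow> real" where
    "pt p q = (\<lambda>j. real (q j) / real p)" for p q
  define lab :: "nat \<Rightarrow> (nat \<Rightarrow> nat) \<Rightarrow> nat \<Rightarrow> nat" where
    "lab p q j = (if q j \<noteq> p \<and> (q j = 0 \<or> pt p q j \<le> f (pt p q) j) then 0 else 1)" for p q j
  have ptC: "\<forall>j<N. 0 \<le> pt p q j \<and> pt p q j \<le> 1" if "0 < p" "\<forall>j<N. q j \<le> p" for p q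
    using that by (auto simp: pt_def divide_le_eq_1)
  have labprop: "(pt p q j - f (pt p q) j) * (pt p q' j - f (pt p q') j) \<le> 0"
    if "0 < p" "\<forall>j<N. q j \<le> p" "\<forall>j<N. q' j \<le> p" "j < N" "lab p q j \<noteq> lab p q' j" for p q q' j
  proof -
    have A: "pt p r j \<le> f (pt p r) j" if "lab p r j = 0" "\<forall>j<N. r j \<le> p" for r
    proof (cases "r j = 0")
      case True
      then show ?thesis using maps[OF ptC[OF \<open>0<p\<close> that(2)]] \<open>j<N\<close> by (auto simp: pt_def)
    next
      case False then show ?thesis using that(1) by (auto simp: lab_def split: if_splits)
    qed
    have B: "f (pt p r) j \<le> pt p r j" if "lab p r j = 1" "\<forall>j<N. r j \<le> p" for r
    proof (cases "r j = p")
      case True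
      then show ?thesis using maps[OF ptC[OF \<open>0<p\<close> that(2)]] \<open>j<N\<close> \<open>0<p\<close> by (auto simp: pt_def)
    next
      case False then show ?thesis using that(1) by (auto simp: lab_def split: if_splits)
    qed
    have l01: "lab p r j = 0 \<or> lab p r j = 1" for r by (simp add: lab_def)
    from l01[of q] l01[of q'] that(5) consider "lab p q j = 0" "lab p q' j = 1" | "lab p q j = 1" "lab p q' j = 0"
      by auto
    then show ?thesis
    proof cases
      case 1
      then show ?thesis using A[of q] B[of q'] that by (intro mult_nonpos_nonneg) auto
    next
      case 2
      then show ?thesis using A[of q'] B[of q] that by (intro mult_nonneg_nonpos) auto
    qed
  qed
  define PQ where "PQ k q \<longleftrightarrow> (\<forall>j<N. q j < Suc k) \<and> (\<forall>j<N. \<exists>r s. (\<forall>i<N. q i \<le> r i \<and> r i \<le> q i + 1) \<and>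
       (\<forall>i<N. q i \<le> s i \<and> s i \<le> q i + 1) \<and> lab (Suc k) r j \<noteq> lab (Suc k) s j)" for k q
  have exq: "\<forall>k. \<exists>q. PQ k q"
  proof
    fix k
    obtain q where "\<forall>i<N. q i < Suc k" "\<forall>i<N. \<exists>r s. (\<forall>j<N. q j \<le> r j \<and> r j \<le> q j + 1) \<and>
       (\<forall>j<N. q j \<le> s j \<and> s j \<le> q j + 1) \<and> lab (Suc k) r i \<noteq> lab (Suc k) s i"
      by (rule kuhn_lemma[of "Suc k" N "lab (Suc k)"]) (auto simp: lab_def)
    then show "\<exists>q. PQ k q" unfolding PQ_def by blast
  qed
  obtain Q where QQ: "\<forall>k. PQ k (Q k)" using choice[OF exq] by blast
  have Q1: "\<forall>j<N. Q k j < Suc k" for k using QQ unfolding PQ_def by blast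
  define PR where "PR kj rs \<longleftrightarrow> (snd kj < N \<longrightarrow> (\<forall>i<N. Q (fst kj) i \<le> fst rs i \<and> fst rs i \<le> Q (fst kj) i + 1) \<and>
       (\<forall>i<N. Q (fst kj) i \<le> snd rs i \<and> snd rs i \<le> Q (fst kj) i + 1) \<and> lab (Suc (fst kj)) (fst rs) (snd kj) \<noteq> lab (Suc (fst kj)) (snd rs) (snd kj))"
    for kj :: "nat \<times> nat" and rs :: "(nat \<Rightarrow> nat) \<times> (nat \<Rightarrow> nat)"
  have exrs: "\<forall>kj. \<exists>rs. PR kj rs"
  proof
    fix kj :: "nat \<times> nat"
    obtain k j where kj: "kj = (k, j)" by fastforce
    show "\<exists>rs. PR kj rs"
    proof (cases "j < N")
      case True
      with QQ obtain r s where "(\<forall>i<N. Q k i \<le> r i \<and> r i \<le> Q k i + 1) \<and>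
       (\<forall>i<N. Q k i \<le> s i \<and> s i \<le> Q k i + 1) \<and> lab (Suc k) r j \<noteq> lab (Suc k) s j"
        unfolding PQ_def by blast
      then have "PR kj (r, s)" unfolding PR_def kj by simp
      then show ?thesis ..
    next
      case False
      then have "PR kj (id, id)" unfolding PR_def kj by simp
      then show ?thesis ..
    qed
  qed
  obtain F where FF: "\<forall>kj. PR kj (F kj)" using choice[OF exrs] by blast
  define R where "R k j = fst (F (k, j))" for k j
  define Ss where "Ss k j = snd (F (k, j))" for k j
  have RS: "(\<forall>i<N. Q k i \<le> R k j i \<and> R k j i \<le> Q k i + 1) \<and>
       (\<forall>i<N. Q k i \<le> Ss k j i \<and> Ss k j i \<le> Q k i + 1) \<and> lab (Suc k) (R k j) j \<noteq> lab (Suc k) (Ss k j) j"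
    if "j < N" for k j
    using FF[rule_format, of "(k, j)"] that unfolding PR_def R_def Ss_def by simp
  define Z where "Z k = pt (Suc k) (Q k)" for k
  have ZC: "\<forall>j<N. 0 \<le> Z k j \<and> Z k j \<le> 1" for k
    unfolding Z_def by (rule ptC) (simp, use Q1[of k] in force)
  obtain \<phi> z where phz: "strict_mono \<phi>" "\<forall>j<N. (\<lambda>k. Z (\<phi> k) j) \<longlonglongrightarrow> z j"
    using bw_multi[of N Z] ZC by blast
  have zC: "\<forall>j<N. 0 \<le> z j \<and> z j \<le> 1"
  proof (intro allI impI conjI)
    fix j assume "j < N"
    show "0 \<le> z j" by (rule LIMSEQ_le_const[OF phz(2)[rule_format, OF \<open>j<N\<close>]]) (use ZC \<open>j<N\<close> in auto)
    show "z j \<le> 1" by (rule LIMSEQ_le_const2[OF phz(2)[rule_format, OF \<open>j<N\<close>]]) (use ZC \<open>j<N\<close> in auto)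
  qed
  have inv0: "(\<lambda>k. 1 / real (Suc (\<phi> k))) \<longlonglongrightarrow> 0"
  proof -
    have "(\<lambda>k. 1 / real (Suc k)) \<longlonglongrightarrow> 0" by (rule LIMSEQ_Suc[OF lim_const_over_n])
    from LIMSEQ_subseq_LIMSEQ[OF this phz(1)] show ?thesis by (simp add: o_def)
  qed
  have near: "(\<lambda>k. pt (Suc (\<phi> k)) (W k) i) \<longlonglongrightarrow> z i"
    if "i < N" "\<And>k. Q (\<phi> k) i \<le> W k i \<and> W k i \<le> Q (\<phi> k) i + 1" for W i
  proof -
    have "(\<lambda>k. pt (Suc (\<phi> k)) (W k) i - Z (\<phi> k) i) \<longlonglongrightarrow> 0"
    proof (rule Lim_null_comparison[OF _ inv0])
      show "\<forall>\<^sub>F k in sequentially. norm (pt (Suc (\<phi> k)) (W k) i - Z (\<phi> k) i) \<le> 1 / real (Suc (\<phi> k))"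
      proof (intro always_eventually allI)
        fix k
        have "real (Q (\<phi> k) i) \<le> real (W k i)" "real (W k i) \<le> real (Q (\<phi> k) i) + 1"
          using that(2)[of k] by auto
        then have ab: "\<bar>real (W k i) - real (Q (\<phi> k) i)\<bar> \<le> 1" by linarith
        have e: "pt (Suc (\<phi> k)) (W k) i - Z (\<phi> k) i = (real (W k i) - real (Q (\<phi> k) i)) / real (Suc (\<phi> k))"
          by (simp add: Z_def pt_def diff_divide_distrib)
        show "norm (pt (Suc (\<phi> k)) (W k) i - Z (\<phi> k) i) \<le> 1 / real (Suc (\<phi> k))"
          unfolding e real_norm_def abs_divide abs_of_nat using ab by (intro divide_right_mono) auto
      qed
    qed
    from tendsto_add[OF this phz(2)[rule_format, OF \<open>i<N\<close>]] show ?thesis by simp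
  qed
  have "f z j = z j" if "j < N" for j
  proof -
    let ?A = "\<lambda>k. pt (Suc (\<phi> k)) (R (\<phi> k) j)" and ?B = "\<lambda>k. pt (Suc (\<phi> k)) (Ss (\<phi> k) j)"
    have Rle: "\<forall>i<N. R (\<phi> k) j i \<le> Suc (\<phi> k)" for k
    proof (intro allI impI)
      fix i assume "i < N"
      then have "R (\<phi> k) j i \<le> Q (\<phi> k) i + 1" using RS[OF that, of "\<phi> k"] by blast
      moreover have "Q (\<phi> k) i < Suc (\<phi> k)" using Q1[of "\<phi> k"] \<open>i<N\<close> by blast
      ultimately show "R (\<phi> k) j i \<le> Suc (\<phi> k)" by simp
    qed
    have Sle: "\<forall>i<N. Ss (\<phi> k) j i \<le> Suc (\<phi> k)" for k
    proof (intro allI impI)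
      fix i assume "i < N"
      then have "Ss (\<phi> k) j i \<le> Q (\<phi> k) i + 1" using RS[OF that, of "\<phi> k"] by blast
      moreover have "Q (\<phi> k) i < Suc (\<phi> k)" using Q1[of "\<phi> k"] \<open>i<N\<close> by blast
      ultimately show "Ss (\<phi> k) j i \<le> Suc (\<phi> k)" by simp
    qed
    have AC: "\<forall>i<N. 0 \<le> ?A k i \<and> ?A k i \<le> 1" for k
      by (rule ptC) (simp, rule Rle)
    have BC: "\<forall>i<N. 0 \<le> ?B k i \<and> ?B k i \<le> 1" for k
      by (rule ptC) (simp, rule Sle)
    have Al: "(\<lambda>k. ?A k i) \<longlonglongrightarrow> z i" if "i < N" for i
      by (rule near[OF that]) (use RS[OF \<open>j<N\<close>] that in blast)
    have Bl: "(\<lambda>k. ?B k i) \<longlonglongrightarrow> z i" if "i < N" for i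
      by (rule near[OF that]) (use RS[OF \<open>j<N\<close>] that in blast)
    have fA: "(\<lambda>k. f (?A k) j) \<longlonglongrightarrow> f z j" by (rule cont[OF AC zC Al that])
    have fB: "(\<lambda>k. f (?B k) j) \<longlonglongrightarrow> f z j" by (rule cont[OF BC zC Bl that])
    have lim: "(\<lambda>k. (?A k j - f (?A k) j) * (?B k j - f (?B k) j)) \<longlonglongrightarrow> (z j - f z j) * (z j - f z j)"
      by (intro tendsto_intros Al Bl fA fB that)
    have "(z j - f z j) * (z j - f z j) \<le> 0"
    proof (rule LIMSEQ_le_const2[OF lim], intro exI allI impI)
      fix k
      show "(?A k j - f (?A k) j) * (?B k j - f (?B k) j) \<le> 0"
      proof (rule labprop)
        show "lab (Suc (\<phi> k)) (R (\<phi> k) j) j \<noteq> lab (Suc (\<phi> k)) (Ss (\<phi> k) j) j"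
          using RS[OF that, of "\<phi> k"] by blast
      qed (use Rle Sle that in auto)
    qed
    then have "(z j - f z j) * (z j - f z j) = 0" by (meson zero_le_square order_antisym)
    then show ?thesis by simp
  qed
  then show ?thesis using zC by blast
qed



lemma brouwer_fin:
  fixes f :: "('a \<Rightarrow> real) \<Rightarrow> ('a \<Rightarrow> real)" and D :: "'a set"
  assumes fin: "finite D"
  and maps: "\<And>x. \<forall>d\<in>D. 0 \<le> x d \<and> x d \<le> 1 \<Longrightarrow> \<forall>d\<in>D. 0 \<le> f x d \<and> f x d \<le> 1"
  and cont: "\<And>X x d. (\<And>k. \<forall>d\<in>D. 0 \<le> X k d \<and> X k d \<le> 1) \<Longrightarrow> \<forall>d\<in>D. 0 \<le> x d \<and> x d \<le> 1
      \<Longrightarrow> (\<And>d. d \<in> D \<Longrightarrow> (\<lambda>k. X k d) \<longlonglongrightarrow> x d) \<Longrightarrow> d \<in> D \<Longrightarrow> (\<lambda>k. f (X k) d) \<longlonglongrightarrow> f x d"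
  shows "\<exists>x. (\<forall>d\<in>D. 0 \<le> x d \<and> x d \<le> 1) \<and> (\<forall>d\<in>D. f x d = x d)"
proof -
  define N where "N = card D"
  obtain e where e: "bij_betw e {..<N} D"
    using ex_bij_betw_nat_finite[OF fin] unfolding N_def atLeast0LessThan by blast
  define e' where "e' = inv_into {..<N} e"
  have e'D: "e' d < N" if "d \<in> D" for d
    using e that unfolding e'_def bij_betw_def by (metis inv_into_into lessThan_iff)
  have ee': "e (e' d) = d" if "d \<in> D" for d
    using e that unfolding e'_def bij_betw_def by (simp add: f_inv_into_f)
  have eD: "e j \<in> D" if "j < N" for j using e that unfolding bij_betw_def by auto
  define g where "g y = (\<lambda>j. f (\<lambda>d. y (e' d)) (e j))" for y
  have "\<exists>y. (\<forall>j<N. 0 \<le> y j \<and> y j \<le> 1) \<and> (\<forall>j<N. g y j = y j)"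
  proof (rule brouwer_nat)
    fix y :: "nat \<Rightarrow> real" assume y: "\<forall>j<N. 0 \<le> y j \<and> y j \<le> 1"
    then have "\<forall>d\<in>D. 0 \<le> y (e' d) \<and> y (e' d) \<le> 1" using e'D by blast
    from maps[OF this] show "\<forall>j<N. 0 \<le> g y j \<and> g y j \<le> 1" unfolding g_def using eD by blast
  next
    fix X :: "nat \<Rightarrow> nat \<Rightarrow> real" and y :: "nat \<Rightarrow> real" and j :: nat
    assume X: "\<And>k. \<forall>j<N. 0 \<le> X k j \<and> X k j \<le> 1" and y: "\<forall>j<N. 0 \<le> y j \<and> y j \<le> 1"
      and l: "\<And>j. j < N \<Longrightarrow> (\<lambda>k. X k j) \<longlonglongrightarrow> y j" and j: "j < N"
    have "(\<lambda>k. f (\<lambda>d. X k (e' d)) (e j)) \<longlonglongrightarrow> f (\<lambda>d. y (e' d)) (e j)"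
    proof (rule cont)
      show "\<forall>d\<in>D. 0 \<le> X k (e' d) \<and> X k (e' d) \<le> 1" for k using X e'D by blast
      show "\<forall>d\<in>D. 0 \<le> y (e' d) \<and> y (e' d) \<le> 1" using y e'D by blast
      show "(\<lambda>k. X k (e' d)) \<longlonglongrightarrow> y (e' d)" if "d \<in> D" for d using l e'D that by blast
      show "e j \<in> D" using eD j .
    qed
    then show "(\<lambda>k. g (X k) j) \<longlonglongrightarrow> g y j" unfolding g_def .
  qed
  then obtain y where y: "\<forall>j<N. 0 \<le> y j \<and> y j \<le> 1" "\<forall>j<N. g y j = y j" by blast
  show ?thesis
  proof (intro exI conjI ballI)
    fix d assume d: "d \<in> D"
    show "0 \<le> y (e' d)" "y (e' d) \<le> 1" using y(1) e'D[OF d] by auto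
    have "g y (e' d) = y (e' d)" using y(2) e'D[OF d] by blast
    then show "f (\<lambda>d. y (e' d)) d = y (e' d)" unfolding g_def ee'[OF d] .
  qed
qed

definition prof :: "nat \<Rightarrow> (nat \<Rightarrow> 's set) \<Rightarrow> (nat \<times> 's \<Rightarrow> real) \<Rightarrow> nat \<Rightarrow> 's \<Rightarrow> real" where
  "prof n S x i s = (if i < n \<and> s \<in> S i then x (i, s) else 0)"

definition ssum :: "(nat \<Rightarrow> 's set) \<Rightarrow> (nat \<times> 's \<Rightarrow> real) \<Rightarrow> nat \<Rightarrow> real" where
  "ssum S x i = (\<Sum>t\<in>S i. x (i, t))"

definition epsl :: "(nat \<Rightarrow> 's set) \<Rightarrow> (nat \<times> 's \<Rightarrow> real) \<Rightarrow> nat \<Rightarrow> real" where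
  "epsl S x i = max 0 (1 - ssum S x i)"

definition retr :: "(nat \<Rightarrow> 's set) \<Rightarrow> (nat \<times> 's \<Rightarrow> real) \<Rightarrow> nat \<times> 's \<Rightarrow> real" where
  "retr S x d = (x d + epsl S x (fst d)) / (ssum S x (fst d) + real (card (S (fst d))) * epsl S x (fst d))"

definition delta :: "'s \<Rightarrow> 's \<Rightarrow> real" where
  "delta s = (\<lambda>t. if t = s then 1 else 0)"

definition gain :: "nat \<Rightarrow> (nat \<Rightarrow> 's set) \<Rightarrow> 's payoff \<Rightarrow> (nat \<Rightarrow> 's \<Rightarrow> real) \<Rightarrow> nat \<Rightarrow> 's \<Rightarrow> real" where
  "gain n S P \<sigma> i s = max 0 (exp_payoff n S P (\<sigma>(i := delta s)) i - exp_payoff n S P \<sigma> i)"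

definition nashmap :: "nat \<Rightarrow> (nat \<Rightarrow> 's set) \<Rightarrow> 's payoff \<Rightarrow> (nat \<times> 's \<Rightarrow> real) \<Rightarrow> nat \<times> 's \<Rightarrow> real" where
  "nashmap n S P x d = (let \<sigma> = prof n S (retr S x) in
     (\<sigma> (fst d) (snd d) + gain n S P \<sigma> (fst d) (snd d)) / (1 + (\<Sum>t\<in>S (fst d). gain n S P \<sigma> (fst d) t)))"

lemma exp_lin:
  assumes fin: "\<forall>i<n. finite (S i)" and j: "j < n"
  shows "exp_payoff n S P (\<sigma>(j := \<tau>)) j = (\<Sum>t\<in>S j. \<tau> t * exp_payoff n S P (\<sigma>(j := delta t)) j)"
proof -
  have finP: "finite (positions n S)" unfolding positions_def using fin by (intro finite_PiE) auto
  have pr: "(\<Prod>i<n. (\<sigma>(j := \<rho>)) i (v i)) = \<rho> (v j) * (\<Prod>i\<in>{..<n} - {j}. \<sigma> i (v i))" for \<rho> v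
  proof -
    have "(\<Prod>i<n. (\<sigma>(j := \<rho>)) i (v i)) = (\<sigma>(j := \<rho>)) j (v j) * (\<Prod>i\<in>{..<n} - {j}. (\<sigma>(j := \<rho>)) i (v i))"
      using j by (subst prod.remove[of _ j]) auto
    also have "(\<Prod>i\<in>{..<n} - {j}. (\<sigma>(j := \<rho>)) i (v i)) = (\<Prod>i\<in>{..<n} - {j}. \<sigma> i (v i))"
      by (rule prod.cong) auto
    finally show ?thesis by simp
  qed
  have "(\<Sum>t\<in>S j. \<tau> t * exp_payoff n S P (\<sigma>(j := delta t)) j)
      = (\<Sum>t\<in>S j. \<Sum>v\<in>positions n S. \<tau> t * (delta t (v j) * (\<Prod>i\<in>{..<n} - {j}. \<sigma> i (v i)) * P v j))"
    unfolding exp_payoff_def pr by (simp add: sum_distrib_left)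
  also have "\<dots> = (\<Sum>v\<in>positions n S. \<Sum>t\<in>S j. \<tau> t * (delta t (v j) * (\<Prod>i\<in>{..<n} - {j}. \<sigma> i (v i)) * P v j))"
    by (rule sum.swap)
  also have "\<dots> = (\<Sum>v\<in>positions n S. \<tau> (v j) * (\<Prod>i\<in>{..<n} - {j}. \<sigma> i (v i)) * P v j)"
  proof (rule sum.cong[OF refl])
    fix v assume v: "v \<in> positions n S"
    then have vj: "v j \<in> S j" using j unfolding positions_def by (auto simp: PiE_iff)
    have "(\<Sum>t\<in>S j. \<tau> t * (delta t (v j) * (\<Prod>i\<in>{..<n} - {j}. \<sigma> i (v i)) * P v j))
        = (\<Sum>t\<in>S j. if v j = t then \<tau> t * ((\<Prod>i\<in>{..<n} - {j}. \<sigma> i (v i)) * P v j) else 0)"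
      by (rule sum.cong) (auto simp: delta_def)
    also have "\<dots> = \<tau> (v j) * (\<Prod>i\<in>{..<n} - {j}. \<sigma> i (v i)) * P v j"
      using fin j vj by (simp add: sum.delta' mult.assoc)
    finally show "(\<Sum>t\<in>S j. \<tau> t * (delta t (v j) * (\<Prod>i\<in>{..<n} - {j}. \<sigma> i (v i)) * P v j))
        = \<tau> (v j) * (\<Prod>i\<in>{..<n} - {j}. \<sigma> i (v i)) * P v j" .
  qed
  also have "\<dots> = exp_payoff n S P (\<sigma>(j := \<tau>)) j"
    unfolding exp_payoff_def pr by (simp add: mult.assoc)
  finally show ?thesis by simp
qed

lemma exp_cont:
  assumes "\<And>i s. (\<lambda>k. \<Sigma> k i s) \<longlonglongrightarrow> \<sigma> i s"
  shows "(\<lambda>k. exp_payoff n S P (\<Sigma> k) j) \<longlonglongrightarrow> exp_payoff n S P \<sigma> j"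
  unfolding exp_payoff_def by (intro tendsto_intros assms)



lemma den_ge1:
  assumes "\<forall>s\<in>S i. 0 \<le> x (i, s)" "finite (S i)" "S i \<noteq> {}"
  shows "1 \<le> ssum S x i + real (card (S i)) * epsl S x i"
proof -
  have k: "1 \<le> real (card (S i))" using assms(2,3) by (simp add: Suc_leI card_gt_0_iff)
  have s0: "0 \<le> ssum S x i" unfolding ssum_def using assms(1) by (simp add: sum_nonneg)
  show ?thesis
  proof (cases "1 \<le> ssum S x i")
    case True
    then have "epsl S x i = 0" unfolding epsl_def by simp
    then show ?thesis using True by simp
  next
    case False
    then have e: "epsl S x i = 1 - ssum S x i" unfolding epsl_def by simp
    have "0 \<le> (real (card (S i)) - 1) * (1 - ssum S x i)" using k False by simp
    then show ?thesis unfolding e by (simp add: algebra_simps)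
  qed
qed

lemma prof_mixed:
  assumes fin: "\<forall>i<n. finite (S i) \<and> S i \<noteq> {}" and x: "\<forall>d\<in>Sigma {..<n} S. 0 \<le> x d" and i: "i < n"
  shows "mixed_strategy (S i) (prof n S (retr S x) i)"
proof -
  have xi: "\<forall>s\<in>S i. 0 \<le> x (i, s)" using x i by auto
  define den where "den = ssum S x i + real (card (S i)) * epsl S x i"
  have den: "1 \<le> den" unfolding den_def using den_ge1[of S i x] xi fin i by auto
  have e0: "0 \<le> epsl S x i" unfolding epsl_def by simp
  have r: "retr S x (i, s) = (x (i, s) + epsl S x i) / den" for s unfolding retr_def den_def by simp
  show ?thesis unfolding mixed_strategy_def
  proof (intro conjI allI impI)
    fix s show "0 \<le> prof n S (retr S x) i s"
      unfolding prof_def r using xi e0 den by auto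
  next
    fix s assume "s \<notin> S i" then show "prof n S (retr S x) i s = 0" unfolding prof_def by simp
  next
    have "sum (prof n S (retr S x) i) (S i) = (\<Sum>s\<in>S i. (x (i, s) + epsl S x i) / den)"
      unfolding prof_def r using i by simp
    also have "\<dots> = (ssum S x i + real (card (S i)) * epsl S x i) / den"
      unfolding ssum_def by (simp add: sum_divide_distrib[symmetric] sum.distrib)
    also have "\<dots> = 1" using den unfolding den_def by simp
    finally show "sum (prof n S (retr S x) i) (S i) = 1" .
  qed
qed

lemma mixed_le1:
  assumes "mixed_strategy A p" "finite A" shows "p s \<le> 1"
proof (cases "s \<in> A")
  case True
  then have "p s \<le> sum p A" using assms by (intro member_le_sum) (auto simp: mixed_strategy_def)
  then show ?thesis using assms unfolding mixed_strategy_def by simp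
next
  case False then show ?thesis using assms unfolding mixed_strategy_def by simp
qed

lemma nashmap_bounds:
  assumes fin: "\<forall>i<n. finite (S i) \<and> S i \<noteq> {}" and x: "\<forall>d\<in>Sigma {..<n} S. 0 \<le> x d"
    and d: "d \<in> Sigma {..<n} S"
  shows "0 \<le> nashmap n S P x d \<and> nashmap n S P x d \<le> 1"
proof -
  obtain i s where isd: "d = (i, s)" "i < n" "s \<in> S i" using d by auto
  define \<sigma> where "\<sigma> = prof n S (retr S x)"
  have m: "mixed_strategy (S i) (\<sigma> i)" unfolding \<sigma>_def using prof_mixed[OF fin x isd(2)] .
  have fi: "finite (S i)" using fin isd by auto
  define G where "G = (\<Sum>t\<in>S i. gain n S P \<sigma> i t)"
  have g0: "0 \<le> gain n S P \<sigma> i t" for t unfolding gain_def by simp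
  have gG: "gain n S P \<sigma> i s \<le> G" unfolding G_def using fi isd g0 by (intro member_le_sum) auto
  have s0: "0 \<le> \<sigma> i s" "\<sigma> i s \<le> 1" using m mixed_le1[OF m fi] unfolding mixed_strategy_def by auto
  have "nashmap n S P x d = (\<sigma> i s + gain n S P \<sigma> i s) / (1 + G)"
    unfolding nashmap_def \<sigma>_def G_def isd Let_def by simp
  then show ?thesis using s0 gG g0[of s] by (simp add: divide_le_eq_1)
qed

lemma nashmap_cont:
  assumes fin: "\<forall>i<n. finite (S i) \<and> S i \<noteq> {}"
    and X: "\<And>k. \<forall>d\<in>Sigma {..<n} S. 0 \<le> X k d" and x: "\<forall>d\<in>Sigma {..<n} S. 0 \<le> x d"
    and l: "\<And>d. d \<in> Sigma {..<n} S \<Longrightarrow> (\<lambda>k. X k d) \<longlonglongrightarrow> x d"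
    and d: "d \<in> Sigma {..<n} S"
  shows "(\<lambda>k. nashmap n S P (X k) d) \<longlonglongrightarrow> nashmap n S P x d"
proof -
  have ss: "(\<lambda>k. ssum S (X k) i) \<longlonglongrightarrow> ssum S x i" if "i < n" for i
    unfolding ssum_def by (intro tendsto_intros l) (use that in auto)
  have rl: "(\<lambda>k. retr S (X k) (i, s)) \<longlonglongrightarrow> retr S x (i, s)" if "i < n" "s \<in> S i" for i s
  proof -
    have "1 \<le> ssum S x i + real (card (S i)) * epsl S x i"
      using den_ge1[of S i x] x fin that by auto
    then show ?thesis unfolding retr_def epsl_def fst_conv
      by (intro tendsto_intros l ss that) (use that in auto)
  qed
  have pl: "(\<lambda>k. prof n S (retr S (X k)) i s) \<longlonglongrightarrow> prof n S (retr S x) i s" for i s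
    unfolding prof_def using rl by auto
  have pld: "(\<lambda>k. ((prof n S (retr S (X k)))(i := delta t)) i' s) \<longlonglongrightarrow> ((prof n S (retr S x))(i := delta t)) i' s"
    for i t i' s
    by (cases "i' = i") (auto intro: pl)
  have gl: "(\<lambda>k. gain n S P (prof n S (retr S (X k))) i t) \<longlonglongrightarrow> gain n S P (prof n S (retr S x)) i t" for i t
    unfolding gain_def by (intro tendsto_intros exp_cont pld pl)
  have Gn: "1 + (\<Sum>t\<in>S i. gain n S P (prof n S (retr S x)) i t) \<noteq> 0" for i
  proof -
    have "0 \<le> (\<Sum>t\<in>S i. gain n S P (prof n S (retr S x)) i t)" by (intro sum_nonneg) (simp add: gain_def)
    then show ?thesis by linarith
  qed
  show ?thesis unfolding nashmap_def Let_def
    by (intro tendsto_intros pl gl Gn)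
qed

lemma nash_exists:
  assumes fin: "\<forall>i<n. finite (S i) \<and> S i \<noteq> {}"
  shows "\<exists>\<sigma>. nash_eq n S P \<sigma>"
proof -
  let ?D = "Sigma {..<n} S"
  have finD: "finite ?D" using fin by (intro finite_SigmaI) auto
  obtain x where x: "\<forall>d\<in>?D. 0 \<le> x d \<and> x d \<le> 1" and fx: "\<forall>d\<in>?D. nashmap n S P x d = x d"
  proof -
    have "\<exists>x. (\<forall>d\<in>?D. 0 \<le> x d \<and> x d \<le> 1) \<and> (\<forall>d\<in>?D. nashmap n S P x d = x d)"
    proof (rule brouwer_fin[OF finD])
      fix x :: "nat \<times> 'a \<Rightarrow> real" assume xx: "\<forall>d\<in>?D. 0 \<le> x d \<and> x d \<le> 1"
      have x0: "\<forall>d\<in>?D. 0 \<le> x d" using xx by simp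
      show "\<forall>d\<in>?D. 0 \<le> nashmap n S P x d \<and> nashmap n S P x d \<le> 1"
      proof
        fix d assume "d \<in> ?D"
        from nashmap_bounds[OF fin x0 this] show "0 \<le> nashmap n S P x d \<and> nashmap n S P x d \<le> 1" .
      qed
    next
      fix X :: "nat \<Rightarrow> nat \<times> 'a \<Rightarrow> real" and x d
      assume a1: "\<And>k. \<forall>d\<in>?D. 0 \<le> X k d \<and> X k d \<le> 1" and a2: "\<forall>d\<in>?D. 0 \<le> x d \<and> x d \<le> 1"
        and a3: "\<And>d. d \<in> ?D \<Longrightarrow> (\<lambda>k. X k d) \<longlonglongrightarrow> x d" and a4: "d \<in> ?D"
      have b1: "\<forall>d\<in>?D. 0 \<le> X k d" for k using a1[of k] by simp
      have b2: "\<forall>d\<in>?D. 0 \<le> x d" using a2 by simp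
      show "(\<lambda>k. nashmap n S P (X k) d) \<longlonglongrightarrow> nashmap n S P x d"
        by (rule nashmap_cont[OF fin b1 b2 a3 a4])
    qed
    then show ?thesis using that by blast
  qed
  define \<sigma> where "\<sigma> = prof n S (retr S x)"
  have x0: "\<forall>d\<in>?D. 0 \<le> x d" using x by blast
  have mix: "mixed_strategy (S i) (\<sigma> i)" if "i < n" for i unfolding \<sigma>_def using prof_mixed[OF fin x0 that] .
  have best: "exp_payoff n S P (\<sigma>(i := \<tau>)) i \<le> exp_payoff n S P \<sigma> i"
    if i: "i < n" and \<tau>: "mixed_strategy (S i) \<tau>" for i \<tau>
  proof -
    have fi: "finite (S i)" "S i \<noteq> {}" using fin i by auto
    have finall: "\<forall>i<n. finite (S i)" using fin by blast
    define g where "g t = gain n S P \<sigma> i t" for t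
    define G where "G = (\<Sum>t\<in>S i. g t)"
    have g0: "0 \<le> g t" for t unfolding g_def gain_def by simp
    have G0: "0 \<le> G" unfolding G_def by (intro sum_nonneg g0)
    have nm: "nashmap n S P x (i, s) = (\<sigma> i s + g s) / (1 + G)" for s
      unfolding nashmap_def \<sigma>_def g_def G_def Let_def by simp
    have sum1: "(\<Sum>s\<in>S i. \<sigma> i s) = 1" using mix[OF i] unfolding mixed_strategy_def by simp
    have "ssum S x i = (\<Sum>s\<in>S i. nashmap n S P x (i, s))"
      unfolding ssum_def using fx i by (intro sum.cong) auto
    also have "\<dots> = ((\<Sum>s\<in>S i. \<sigma> i s) + G) / (1 + G)"
      unfolding nm G_def by (simp add: sum_divide_distrib[symmetric] sum.distrib)
    also have "\<dots> = 1" using sum1 G0 by simp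
    finally have ss1: "ssum S x i = 1" .
    have sx: "\<sigma> i s = x (i, s)" if "s \<in> S i" for s
      unfolding \<sigma>_def prof_def retr_def epsl_def using ss1 that i by simp
    have key: "\<sigma> i s * G = g s" if "s \<in> S i" for s
    proof -
      have "\<sigma> i s = (\<sigma> i s + g s) / (1 + G)" using fx that i nm[of s] sx[OF that] by auto
      moreover have "1 + G \<noteq> 0" using G0 by linarith
      ultimately have "\<sigma> i s * (1 + G) = \<sigma> i s + g s"
        by (simp add: field_simps)
      then show ?thesis by (simp add: algebra_simps)
    qed
    define u where "u = exp_payoff n S P \<sigma> i"
    define w where "w t = exp_payoff n S P (\<sigma>(i := delta t)) i" for t
    have lin: "exp_payoff n S P (\<sigma>(i := \<rho>)) i = (\<Sum>t\<in>S i. \<rho> t * w t)" for \<rho>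
      unfolding w_def using exp_lin[OF finall i] .
    have uu: "u = (\<Sum>t\<in>S i. \<sigma> i t * w t)" unfolding u_def using lin[of "\<sigma> i"] by simp
    have gw: "g t = max 0 (w t - u)" for t unfolding g_def gain_def w_def u_def by simp
    have "G = 0"
    proof (rule ccontr)
      assume "G \<noteq> 0"
      then have Gp: "G > 0" using G0 by simp
      have le: "\<sigma> i t * u \<le> \<sigma> i t * w t" if "t \<in> S i" for t
      proof (cases "\<sigma> i t = 0")
        case False
        have "0 \<le> \<sigma> i t" using mix[OF i] unfolding mixed_strategy_def by blast
        then have "\<sigma> i t > 0" using False by (auto simp: less_le)
        then have "g t > 0" using key[OF that] mult_pos_pos[OF _ Gp] by metis
        then have "u < w t" unfolding gw by simp
        then show ?thesis using \<open>\<sigma> i t > 0\<close> by simp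
      qed simp
      have "\<exists>t\<in>S i. \<sigma> i t \<noteq> 0"
      proof (rule ccontr)
        assume "\<not> (\<exists>t\<in>S i. \<sigma> i t \<noteq> 0)"
        then have "(\<Sum>s\<in>S i. \<sigma> i s) = 0" by simp
        then show False using sum1 by simp
      qed
      then obtain t where t: "t \<in> S i" "\<sigma> i t \<noteq> 0" by blast
      have "0 \<le> \<sigma> i t" using mix[OF i] unfolding mixed_strategy_def by blast
      then have "\<sigma> i t > 0" using t(2) by (auto simp: less_le)
      then have "g t > 0" using key[OF t(1)] mult_pos_pos[OF _ Gp] by metis
      then have "u < w t" unfolding gw by simp
      then have lt: "\<sigma> i t * u < \<sigma> i t * w t" using \<open>\<sigma> i t > 0\<close> by simp
      have "(\<Sum>t\<in>S i. \<sigma> i t * u) < (\<Sum>t\<in>S i. \<sigma> i t * w t)"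
        by (rule sum_strict_mono_ex1[OF fi(1)]) (use le t lt in auto)
      moreover have "(\<Sum>t\<in>S i. \<sigma> i t * u) = u" using sum1 by (simp add: sum_distrib_right[symmetric])
      ultimately show False using uu by simp
    qed
    then have "\<forall>t\<in>S i. g t = 0" unfolding G_def using fi(1) g0 by (simp add: sum_nonneg_eq_0_iff)
    then have wu: "w t \<le> u" if "t \<in> S i" for t
    proof -
      have "w t - u \<le> max 0 (w t - u)" by simp
      then show ?thesis using gw[of t] \<open>\<forall>t\<in>S i. g t = 0\<close> that by simp
    qed
    have "exp_payoff n S P (\<sigma>(i := \<tau>)) i = (\<Sum>t\<in>S i. \<tau> t * w t)" by (rule lin)
    also have "\<dots> \<le> (\<Sum>t\<in>S i. \<tau> t * u)"
      by (intro sum_mono mult_left_mono wu) (use \<tau> in \<open>auto simp: mixed_strategy_def\<close>)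
    also have "\<dots> = u" using \<tau> by (simp add: sum_distrib_right[symmetric] mixed_strategy_def)
    finally show ?thesis unfolding u_def .
  qed
  have "nash_eq n S P \<sigma>" unfolding nash_eq_def mixed_profile_def using mix best by blast
  then show ?thesis by blast
qed



lemma AD_mono: "M \<subseteq> M' \<Longrightarrow> AD n S M \<subseteq> AD n S M'"
  unfolding AD_def by blast

lemma ADpow_mono: "M \<subseteq> M' \<Longrightarrow> (AD n S ^^ t) M \<subseteq> (AD n S ^^ t) M'"
  by (induction t) (auto dest: AD_mono[of _ _ n S])

lemma AD_star_step:
  assumes "g1 \<in> AD n S {g}"
  shows "AD_star n S {g1} \<subseteq> AD_star n S {g}"
proof
  fix h assume "h \<in> AD_star n S {g1}"
  then obtain t where "h \<in> (AD n S ^^ t) {g1}" unfolding AD_star_def by blast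
  moreover have "(AD n S ^^ t) {g1} \<subseteq> (AD n S ^^ t) (AD n S {g})"
    using assms by (intro ADpow_mono) auto
  moreover have "(AD n S ^^ t) (AD n S {g}) = (AD n S ^^ Suc t) {g}"
    by (simp only: funpow_Suc_right o_apply)
  ultimately show "h \<in> AD_star n S {g}" unfolding AD_star_def by blast
qed

lemma AD_star_self: "g \<in> AD_star n S {g}"
proof -
  have "g \<in> (AD n S ^^ 0) {g}" by simp
  then show ?thesis unfolding AD_star_def by blast
qed

lemma step_exists:
  assumes fin: "\<forall>i<n. finite (S i) \<and> S i \<noteq> {}"
  shows "\<exists>\<sigma> u. \<sigma> \<in> NME n S g \<and> u \<in> chi n \<sigma> \<and> u \<in> positions n S"
proof -
  have "\<forall>i. \<exists>\<tau>. i < n \<longrightarrow> nash_eq n S (snd g i) \<tau>" using nash_exists[OF fin] by blast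
  then obtain T where T: "\<And>i. i < n \<Longrightarrow> nash_eq n S (snd g i) (T i)" by metis
  define \<sigma> where "\<sigma> i = T i i" for i
  have NM: "\<sigma> \<in> NME n S g" unfolding NME_def \<sigma>_def using T by blast
  have mix: "mixed_strategy (S i) (\<sigma> i)" if "i < n" for i
    using T[OF that] that unfolding \<sigma>_def nash_eq_def mixed_profile_def by blast
  have "\<forall>i. \<exists>s. i < n \<longrightarrow> s \<in> S i \<and> \<sigma> i s \<noteq> 0"
  proof (intro allI)
    fix i show "\<exists>s. i < n \<longrightarrow> s \<in> S i \<and> \<sigma> i s \<noteq> 0"
    proof (cases "i < n")
      case True
      have "sum (\<sigma> i) (S i) = 1" using mix[OF True] unfolding mixed_strategy_def by blast
      then have "\<exists>s\<in>S i. \<sigma> i s \<noteq> 0" by (metis sum.neutral zero_neq_one)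
      then show ?thesis by blast
    qed simp
  qed
  then obtain U where U: "\<And>i. i < n \<Longrightarrow> U i \<in> S i \<and> \<sigma> i (U i) \<noteq> 0" by metis
  define u where "u = restrict U {..<n}"
  have "u \<in> chi n \<sigma>" unfolding chi_def u_def using U by auto
  moreover have "u \<in> positions n S" unfolding positions_def u_def using U by auto
  ultimately show ?thesis using NM by blast
qed

definition dis :: "nat \<Rightarrow> (nat \<Rightarrow> 's set) \<Rightarrow> 's mgame \<Rightarrow> nat" where
  "dis n S g = card {v \<in> positions n S. \<exists>i<n. snd g i v \<noteq> fst g v}"

lemma reach_terminal:
  assumes fin: "\<forall>i<n. finite (S i) \<and> S i \<noteq> {}"
  shows "\<exists>g'\<in>AD_star n S {g}. g' \<in> AD n S {g'}"
proof (induction g rule: measure_induct_rule[where f = "dis n S"])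
  case (less g)
  obtain \<sigma> u where su: "\<sigma> \<in> NME n S g" "u \<in> chi n \<sigma>" "u \<in> positions n S"
    using step_exists[OF fin] by blast
  have g1: "adapt n g u \<in> AD n S {g}" unfolding AD_def using su by blast
  show ?case
  proof (cases "adapt n g u = g")
    case True
    then show ?thesis using g1 AD_star_self[of g n S] by auto
  next
    case False
    define g1 where "g1 = adapt n g u"
    have ex: "\<exists>i<n. snd g i u \<noteq> fst g u"
    proof (rule ccontr)
      assume "\<not> ?thesis"
      then have "\<forall>i. (if i < n then (snd g i)(u := fst g u) else snd g i) = snd g i"
        by (auto simp: fun_upd_idem)
      then have "adapt n g u = g" unfolding adapt_def by (simp add: prod_eq_iff fun_eq_iff)
      with False show False by simp
    qed
    have finP: "finite (positions n S)" unfolding positions_def using fin by (intro finite_PiE) auto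
    have set_eq: "{v \<in> positions n S. \<exists>i<n. snd g1 i v \<noteq> fst g1 v}
        = {v \<in> positions n S. \<exists>i<n. snd g i v \<noteq> fst g v} - {u}"
      unfolding g1_def adapt_def by auto
    have "dis n S g1 < dis n S g"
      unfolding dis_def set_eq using ex su(3) finP
      by (intro card_Diff1_less) auto
    then obtain g' where g': "g' \<in> AD_star n S {g1}" "g' \<in> AD n S {g'}" using less by blast
    have "g' \<in> AD_star n S {g}" using AD_star_step[OF g1] g' unfolding g1_def by blast
    then show ?thesis using g' by blast
  qed
qed

theorem corollary2:
  fixes n :: nat and S :: "nat \<Rightarrow> 's set" and mG :: "'s mgame"
  assumes "\<forall>i<n. finite (S i) \<and> S i \<noteq> {}"
  shows "terminal_set n S mG \<noteq> {}"
  using reach_terminal[OF assms, of mG] unfolding terminal_set_def by blast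

end
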